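(* Let $S$ be a $d\times d$ symmetric positive semidefinite matrix and $L,U$ symmetric matrices with entries in $\mathbb{R}\cup\{\pm\infty\}$, $L_{ij}\le0\le U_{ij}$ for $i\ne j$ and $L_{ii}=U_{ii}=0$. Let $\widehat K$ be the optimal solution of minimizing $-\log\det K+\operatorname{tr}(SK)+\sum_{i\neq j}\max\{L_{ij}K_{ij},U_{ij}K_{ij}\}$ over positive definite $K$ (convention $\pm\infty\cdot0=0$). For $i\ne j$: if $L_{ij}\le-S_{ij}-\sqrt{S_{ii}S_{jj}}$ then $\widehat K_{ij}\ge0$; if $U_{ij}\ge-S_{ij}+\sqrt{S_{ii}S_{jj}}$ then $\widehat K_{ij}\le0$. In particular, $\widehat K_{ij}=0$ if both conditions hold. *)

theory Defs
  imports "HOL-Analysis.Analysis"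
begin

definition sym_mat :: "real^'n^'n \<Rightarrow> bool" where
  "sym_mat A \<longleftrightarrow> transpose A = A"

definition psd_mat :: "real^'n^'n \<Rightarrow> bool" where
  "psd_mat A \<longleftrightarrow> sym_mat A \<and> (\<forall>x. x \<bullet> (A *v x) \<ge> 0)"

definition pd_mat :: "real^'n^'n \<Rightarrow> bool" where
  "pd_mat A \<longleftrightarrow> sym_mat A \<and> (\<forall>x. x \<noteq> 0 \<longrightarrow> x \<bullet> (A *v x) > 0)"

(* Objective -log det K + tr(SK) + sum_{i<>j} max{L_ij K_ij, U_ij K_ij},
   valued in ereal; in ereal, 0 * (+-\<infinity>) = 0, matching the convention. *)
definition penalized_obj ::
  "real^'n^'n \<Rightarrow> ('n \<Rightarrow> 'n \<Rightarrow> ereal) \<Rightarrow> ('n \<Rightarrow> 'n \<Rightarrow> ereal) \<Rightarrow> real^'n^'n \<Rightarrow> ereal" where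
  "penalized_obj S L U K =
     ereal (- ln (det K) + trace (S ** K)) +
     (\<Sum>(i,j)\<in>{(i,j). i \<noteq> j}. max (L i j * ereal (K $ i $ j)) (U i j * ereal (K $ i $ j)))"

end

theory Submission imports Defs begin

lemma sym_mat_iff: "sym_mat A \<longleftrightarrow> (\<forall>i j. A$i$j = A$j$i)"
  unfolding sym_mat_def transpose_def vec_eq_iff by auto

lemma pd_inj:
  fixes A :: "real^'n^'n"
  assumes "pd_mat A" "A *v x = 0" shows "x = 0"
  using assms unfolding pd_mat_def by (metis inner_zero_right less_irrefl)

lemma pd_rinv:
  fixes A :: "real^'n^'n"
  assumes "pd_mat A" shows "\<exists>B. A ** B = mat 1"
proof -
  have "inj ((*v) A)"
  proof (rule injI)
    fix x y assume "A *v x = A *v y"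
    then have "A *v (x - y) = 0" by (simp add: matrix_vector_mult_diff_distrib)
    then have "x - y = 0" using pd_inj[OF assms] by blast
    then show "x = y" by simp
  qed
  then obtain B where "B ** A = mat 1" using matrix_left_invertible_injective by blast
  then show ?thesis using matrix_left_right_inverse by blast
qed

lemma pd_solve:
  fixes A :: "real^'n^'n"
  assumes "pd_mat A" shows "\<exists>w. A *v w = v"
proof -
  obtain B where "A ** B = mat 1" using pd_rinv[OF assms] by blast
  then have "A *v (B *v v) = v" by (metis matrix_vector_mul_assoc matrix_vector_mul_lid)
  then show ?thesis by blast
qed

lemma pd_det_nz:
  fixes A :: "real^'n^'n"
  assumes "pd_mat A" shows "det A \<noteq> 0"
proof -
  obtain B where "A ** B = mat 1" using pd_rinv[OF assms] by blast
  then have "det A * det B = 1" by (metis det_I det_mul)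
  then show ?thesis by auto
qed

lemma pd_det_pos:
  fixes A :: "real^'n^'n"
  assumes A: "pd_mat A" shows "det A > 0"
proof (rule ccontr)
  assume "\<not> det A > 0"
  then have neg: "det A < 0" using pd_det_nz[OF A] by linarith
  define f where "f s = det ((\<chi> p q. s * A$p$q + (1-s) * (mat 1 :: real^'n^'n)$p$q) :: real^'n^'n)" for s :: real
  have cont: "continuous_on {0..1} f"
    unfolding f_def det_def by (intro continuous_intros)
  have "((\<chi> p q. 0 * A$p$q + (1-0) * (mat 1 :: real^'n^'n)$p$q) :: real^'n^'n) = mat 1"
    by (simp add: vec_eq_iff)
  then have f0: "f 0 = 1" unfolding f_def by simp
  have f1: "f 1 = det A" unfolding f_def by (simp add: vec_eq_iff)
  obtain s where s: "0 \<le> s" "s \<le> 1" "f s = 0"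
    using IVT2'[of f 1 0 0, OF _ _ _ cont] f0 f1 neg by auto
  have "pd_mat ((\<chi> p q. s * A$p$q + (1-s) * (mat 1 :: real^'n^'n)$p$q) :: real^'n^'n)"
  proof -
    have eq: "((\<chi> p q. s * A$p$q + (1-s) * (mat 1 :: real^'n^'n)$p$q) :: real^'n^'n) = s *\<^sub>R A + (1-s) *\<^sub>R mat 1"
      by (simp add: vec_eq_iff)
    have sym: "sym_mat A" "\<And>x. x \<noteq> 0 \<Longrightarrow> x \<bullet> (A *v x) > 0" using A unfolding pd_mat_def by auto
    show ?thesis unfolding eq pd_mat_def
    proof safe
      show "sym_mat (s *\<^sub>R A + (1 - s) *\<^sub>R mat 1)" using sym(1)
        unfolding sym_mat_iff by (simp add: mat_def)
    next
      fix x :: "real^'n" assume "x \<noteq> 0"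
      have "x \<bullet> ((s *\<^sub>R A + (1 - s) *\<^sub>R mat 1) *v x) = s * (x \<bullet> (A *v x)) + (1-s) * (x \<bullet> x)"
        by (simp add: matrix_vector_mult_add_rdistrib scaleR_matrix_vector_assoc[symmetric] inner_add_right)
      moreover have "x \<bullet> (A *v x) > 0" "x \<bullet> x > 0" using sym(2) \<open>x \<noteq> 0\<close> by auto
      ultimately show "x \<bullet> ((s *\<^sub>R A + (1 - s) *\<^sub>R mat 1) *v x) > 0" using s(1,2)
        by (smt (verit) mult_nonneg_nonneg mult_pos_pos)
    qed
  qed
  then show False using pd_det_nz s(3) unfolding f_def by blast
qed

lemma det_two_rows:
  fixes x y v :: "real^'n" and R :: "'n \<Rightarrow> real^'n"
  assumes ij: "i \<noteq> j"
  shows "det ((\<chi> p. if p = i then x + c *s v else if p = j then y + d *s v else R p) :: real^'n^'n)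
    = det ((\<chi> p. if p = i then x else if p = j then y else R p) :: real^'n^'n)
      + c * det ((\<chi> p. if p = i then v else if p = j then y else R p) :: real^'n^'n)
      + d * det ((\<chi> p. if p = i then x else if p = j then v else R p) :: real^'n^'n)"
proof -
  have sw: "\<And>X Y. ((\<chi> p. if p = i then X else if p = j then Y else R p) :: real^'n^'n)
      = (\<chi> p. if p = j then Y else if p = i then X else R p)"
    using ij by (simp add: vec_eq_iff)
  have e1: "det ((\<chi> p. if p = i then x + c *s v else if p = j then y + d *s v else R p) :: real^'n^'n)
    = det ((\<chi> p. if p = i then x else if p = j then y + d *s v else R p) :: real^'n^'n)
      + c * det ((\<chi> p. if p = i then v else if p = j then y + d *s v else R p) :: real^'n^'n)"
    using det_row_add[of i "\<lambda>_. x" "\<lambda>_. c *s v" "\<lambda>p. if p = j then y + d *s v else R p"]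
      det_row_mul[of i c "\<lambda>_. v" "\<lambda>p. if p = j then y + d *s v else R p"]
    by simp
  have e2: "\<And>X. det ((\<chi> p. if p = i then X else if p = j then y + d *s v else R p) :: real^'n^'n)
    = det ((\<chi> p. if p = i then X else if p = j then y else R p) :: real^'n^'n)
      + d * det ((\<chi> p. if p = i then X else if p = j then v else R p) :: real^'n^'n)"
    unfolding sw
    using det_row_add[of j "\<lambda>_. y" "\<lambda>_. d *s v"] det_row_mul[of j d "\<lambda>_. v"]
    by simp
  have z: "det ((\<chi> p. if p = i then v else if p = j then v else R p) :: real^'n^'n) = 0"
    by (rule det_identical_rows[OF ij]) (use ij in \<open>simp add: row_def vec_eq_iff\<close>)
  show ?thesis unfolding e1 e2 z by (simp add: algebra_simps)
qed

lemma det_row_replace: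
  fixes K :: "real^'n^'n"
  assumes sym: "sym_mat K" and w: "K *v w = v"
  shows "det ((\<chi> p. if p = i then v else K$p) :: real^'n^'n) = w$i * det K"
proof -
  have t: "transpose ((\<chi> r c. if c = i then (K *v w)$r else K$r$c) :: real^'n^'n)
      = (\<chi> p. if p = i then v else K$p)"
    using sym unfolding sym_mat_iff w by (simp add: vec_eq_iff transpose_def)
  have c: "det ((\<chi> r c. if c = i then (K *v w)$r else K$r$c) :: real^'n^'n) = w$i * det K"
    by (rule cramer_lemma)
  show ?thesis unfolding t[symmetric] det_transpose c ..
qed


lemma sum_two:
  fixes f :: "'n::finite \<Rightarrow> real"
  assumes ij: "i \<noteq> j"
  shows "(\<Sum>p\<in>UNIV. f p * (if p = i then a else if p = j then b else 0)) = a * f i + b * f j"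
proof -
  have "\<And>p. f p * (if p = i then a else if p = j then b else 0)
      = (if p = i then a * f i else 0) + (if p = j then b * f j else 0)"
    using ij by auto
  then show ?thesis by (simp add: sum.distrib)
qed

lemma pen_nonneg:
  fixes l u :: ereal
  assumes "l \<le> 0" "0 \<le> u"
  shows "0 \<le> max (l * ereal x) (u * ereal x)"
proof (cases "x \<ge> 0")
  case True
  then have "0 \<le> u * ereal x" using assms by (simp add: ereal_zero_le_0_iff)
  then show ?thesis by (simp add: le_max_iff_disj)
next
  case False
  then have "0 \<le> l * ereal x" using assms by (simp add: ereal_zero_le_0_iff)
  then show ?thesis by (simp add: le_max_iff_disj)
qed

lemma core:
  fixes S K :: "real^'n^'n" and L U :: "'n \<Rightarrow> 'n \<Rightarrow> ereal"
  assumes K: "pd_mat K"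
    and opt: "\<And>K'. pd_mat K' \<Longrightarrow> penalized_obj S L U K \<le> penalized_obj S L U K'"
    and fin: "penalized_obj S L U K \<noteq> \<infinity>"
    and ij: "i \<noteq> j"
    and L_sym: "\<And>i j. L i j = L j i"
    and U_sym: "\<And>i j. U i j = U j i"
    and L_nonpos: "\<And>i j. i \<noteq> j \<Longrightarrow> L i j \<le> 0"
    and U_nonneg: "\<And>i j. i \<noteq> j \<Longrightarrow> U i j \<ge> 0"
    and hm: "\<And>x. x * K$i$j > 0 \<Longrightarrow> max (L i j * ereal x) (U i j * ereal x) = ereal (m * x)"
    and k0: "K$i$j \<noteq> 0"
    and ab: "a \<noteq> 0 \<or> b \<noteq> 0"
  shows "0 < a^2 * S$i$i + b^2 * S$j$j + a*b*(S$i$j + S$j$i) + 2*a*b*m"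
proof -
  define k where "k = K$i$j"
  define v :: "real^'n" where "v = (\<chi> p. if p = i then a else if p = j then b else 0)"
  have vi: "v$i = a" and vj: "v$j = b" using ij by (auto simp: v_def)
  have vo: "\<And>p. p \<noteq> i \<Longrightarrow> p \<noteq> j \<Longrightarrow> v$p = 0" by (auto simp: v_def)
  have sv: "\<And>f. (\<Sum>p\<in>UNIV. f p * v$p) = a * f i + b * f j"
    unfolding v_def using sum_two[OF ij] by simp
  have Ksym: "\<And>p q. K$p$q = K$q$p" using K unfolding pd_mat_def sym_mat_iff by auto
  have Kpos: "\<And>x. x \<noteq> 0 \<Longrightarrow> x \<bullet> (K *v x) > 0" using K unfolding pd_mat_def by auto
  obtain w where w: "K *v w = v" using pd_solve[OF K] by blast
  define q where "q = a * w$i + b * w$j"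
  have "v \<noteq> 0" using ab vi vj by auto
  then have "w \<noteq> 0" using w by auto
  have "q = w \<bullet> (K *v w)" unfolding w q_def inner_vec_def using sv[of "\<lambda>p. w$p"]
    by (simp add: mult.commute)
  then have qpos: "q > 0" using Kpos[OF \<open>w \<noteq> 0\<close>] by simp
  define c0 where "c0 = a^2 * S$i$i + b^2 * S$j$j + a*b*(S$i$j + S$j$i)"
  define c where "c = c0 + 2*a*b*m"
  define M where "M t = ((\<chi> p q. K$p$q + t * v$p * v$q) :: real^'n^'n)" for t :: real
  have Mv: "M t *v x = K *v x + (t * (v \<bullet> x)) *\<^sub>R v" for t x
    unfolding M_def by (simp add: vec_eq_iff matrix_vector_mult_def sum.distrib
        sum_distrib_left inner_vec_def algebra_simps)
  have Mpd: "pd_mat (M t)" if "t > 0" for t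
    unfolding pd_mat_def
  proof safe
    show "sym_mat (M t)" unfolding sym_mat_iff M_def using Ksym by (simp add: algebra_simps)
  next
    fix x :: "real^'n" assume "x \<noteq> 0"
    have "x \<bullet> (M t *v x) = x \<bullet> (K *v x) + t * (v \<bullet> x)^2"
      unfolding Mv by (simp add: inner_add_right power2_eq_square inner_commute)
    moreover have "t * (v \<bullet> x)^2 \<ge> 0" using that by simp
    ultimately show "x \<bullet> (M t *v x) > 0" using Kpos[OF \<open>x \<noteq> 0\<close>] by linarith
  qed
  have Mrows: "M t = (\<chi> p. if p = i then K$i + (t*a) *s v else if p = j then K$j + (t*b) *s v else K$p)" for t
    unfolding M_def using vi vj vo by (auto simp: vec_eq_iff)
  have r1: "((\<chi> p. if p = i then K$i else if p = j then K$j else K$p) :: real^'n^'n) = K"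
    by (simp add: vec_eq_iff)
  have r2: "((\<chi> p. if p = i then v else if p = j then K$j else K$p) :: real^'n^'n) = (\<chi> p. if p = i then v else K$p)"
    by (simp add: vec_eq_iff)
  have r3: "((\<chi> p. if p = i then K$i else if p = j then v else K$p) :: real^'n^'n) = (\<chi> p. if p = j then v else K$p)"
    using ij by (simp add: vec_eq_iff)
  have Ksm: "sym_mat K" using K unfolding pd_mat_def by auto
  have Mdet: "det (M t) = det K * (1 + t * q)" for t
    unfolding Mrows det_two_rows[OF ij] r1 r2 r3 det_row_replace[OF Ksm w] q_def
    by (simp add: algebra_simps)
  have Sv: "\<And>p. (\<Sum>q\<in>UNIV. S$p$q * v$q) = a * S$p$i + b * S$p$j" using sv by simp
  have Mtr: "trace (S ** M t) = trace (S ** K) + t * c0" for t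
  proof -
    have "trace (S ** M t) = trace (S ** K) + t * (\<Sum>p\<in>UNIV. (\<Sum>q\<in>UNIV. S$p$q * v$q) * v$p)"
      unfolding M_def trace_def matrix_matrix_mult_def
      by (simp add: sum.distrib sum_distrib_left algebra_simps)
    also have "(\<Sum>p\<in>UNIV. (\<Sum>q\<in>UNIV. S$p$q * v$q) * v$p) = c0"
      unfolding Sv sv c0_def by (simp add: algebra_simps power2_eq_square)
    finally show ?thesis .
  qed
  define Off where "Off = {(p::'n,q::'n). p \<noteq> q}"
  define G where "G X = (\<lambda>(p,q). max (L p q * ereal (X$p$q)) (U p q * ereal (X$p$q)))" for X :: "real^'n^'n"
  have objG: "penalized_obj S L U X = ereal (- ln (det X) + trace (S ** X)) + sum (G X) Off" for X
    unfolding penalized_obj_def G_def Off_def ..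
  have finOff: "finite Off" by simp
  define Rest where "Rest = Off - {(i,j)} - {(j,i)}"
  have split: "sum (G X) Off = G X (i,j) + (G X (j,i) + sum (G X) Rest)" for X
  proof -
    have "(i,j) \<in> Off" "(j,i) \<in> Off - {(i,j)}" using ij by (auto simp: Off_def)
    then show ?thesis unfolding Rest_def
      using sum.remove[OF finOff \<open>(i,j) \<in> Off\<close>] sum.remove[of "Off - {(i,j)}" "(j,i)"] finOff
      by (metis finite_Diff)
  qed
  have restM: "sum (G (M t)) Rest = sum (G K) Rest" for t
  proof (rule sum.cong[OF refl])
    fix pq assume "pq \<in> Rest"
    then obtain p q where pq: "pq = (p,q)" "p \<noteq> q" "(p,q) \<noteq> (i,j)" "(p,q) \<noteq> (j,i)"
      unfolding Rest_def Off_def by auto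
    have "v$p * v$q = 0"
      using pq(2-4) vo by (cases "p = i \<or> p = j"; cases "q = i \<or> q = j") auto
    then have "M t $ p $ q = K $ p $ q" unfolding M_def by simp
    then show "G (M t) pq = G K pq" unfolding pq G_def by simp
  qed
  have Rnn: "sum (G K) Rest \<ge> 0"
  proof (rule sum_nonneg)
    fix pq assume "pq \<in> Rest"
    then obtain p q where pq: "pq = (p,q)" "p \<noteq> q"
      unfolding Rest_def Off_def by auto
    show "G K pq \<ge> 0" unfolding pq G_def using pen_nonneg L_nonpos[OF pq(2)] U_nonneg[OF pq(2)] by simp
  qed
  have GKij: "G K (i,j) = ereal (m * k)" unfolding G_def k_def using hm[of "K$i$j"] k0
    by (simp add: mult_pos_pos) (metis hm k0 not_square_less_zero linorder_neqE_linordered_idom mult_neg_neg mult_pos_pos)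
  have GKji: "G K (j,i) = ereal (m * k)" using GKij unfolding G_def using L_sym U_sym Ksym by simp
  have obK: "penalized_obj S L U K = ereal (- ln (det K) + trace (S ** K)) + (ereal (m*k) + (ereal (m*k) + sum (G K) Rest))"
    unfolding objG split GKij GKji ..
  obtain r where r: "sum (G K) Rest = ereal r"
    using Rnn fin unfolding obK by (cases "sum (G K) Rest") auto
  have detK: "det K > 0" using pd_det_pos[OF K] .
  have key: "ln (1 + t * q) \<le> t * c" if tpos: "t > 0" and tk: "\<bar>t * a * b\<bar> < \<bar>k\<bar>" for t
  proof -
    define x where "x = k + t * a * b"
    have "\<bar>t * a * b * k\<bar> < k * k" using tk k0 unfolding k_def[symmetric]
      by (simp add: abs_mult) (metis abs_mult_self_eq abs_not_less_zero mult_strict_right_mono zero_less_abs_iff k_def)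
    then have xk: "x * k > 0" unfolding x_def by (simp add: algebra_simps)
    have Mij: "M t $ i $ j = x" unfolding M_def x_def k_def using vi vj by simp
    have Mji: "M t $ j $ i = x" unfolding M_def x_def k_def using vi vj Ksym by (simp add: algebra_simps)
    have GMij: "G (M t) (i,j) = ereal (m * x)" unfolding G_def using hm[of x] xk Mij k_def by simp
    have GMji: "G (M t) (j,i) = ereal (m * x)" unfolding G_def using hm[of x] xk Mji k_def L_sym[of j i] U_sym[of j i] by simp
    have "penalized_obj S L U K \<le> penalized_obj S L U (M t)" using opt Mpd[OF tpos] by blast
    then have "- ln (det K) + trace (S ** K) + m*k + m*k + r \<le> - ln (det (M t)) + trace (S ** M t) + m*x + m*x + r"
      unfolding obK unfolding objG split GMij GMji restM r by simp
    moreover have "ln (det (M t)) = ln (det K) + ln (1 + t * q)"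
      unfolding Mdet using detK mult_pos_pos[OF tpos qpos] by (subst ln_mult) auto
    ultimately show ?thesis unfolding Mtr x_def c_def by (simp add: algebra_simps)
  qed
  have "0 < c"
  proof (rule ccontr)
    assume "\<not> 0 < c"
    then have cq: "c < q" using qpos by linarith
    have kpos: "\<bar>k\<bar> > 0" using k0 k_def by simp
    define t where "t = min (1/q) (min (\<bar>k\<bar> / (2 * (\<bar>a*b\<bar> + 1))) ((q - c) / (2 * q^2)))"
    have tpos: "t > 0" unfolding t_def using qpos kpos cq by auto
    have t1: "t * q \<le> 1" using qpos unfolding t_def by (simp add: min_def field_simps)
    have t2: "t \<le> \<bar>k\<bar> / (2 * (\<bar>a*b\<bar> + 1))" unfolding t_def by simp
    have t3: "t \<le> (q - c) / (2 * q^2)" unfolding t_def by simp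
    have "t * \<bar>a*b\<bar> \<le> t * (\<bar>a*b\<bar> + 1)" using tpos by simp
    also have "\<dots> \<le> \<bar>k\<bar> / 2" using t2 by (simp add: field_simps)
    finally have tk: "\<bar>t * a * b\<bar> < \<bar>k\<bar>" using kpos tpos by (simp add: abs_mult)
    have "t * q - (t * q)^2 \<le> ln (1 + t * q)"
      by (rule ln_one_plus_pos_lower_bound) (use tpos qpos t1 in auto)
    then have "t * q - (t*q)^2 \<le> t * c" using key[OF tpos tk] by linarith
    then have "t * (q - t * q^2) \<le> t * c" by (simp add: algebra_simps power2_eq_square)
    then have "q - t * q^2 \<le> c" using tpos by simp
    moreover have "2 * (t * q^2) \<le> q - c" using t3 qpos by (simp add: field_simps)
    ultimately show False using cq by linarith
  qed
  then show ?thesis unfolding c_def c0_def by simp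
qed


lemma diag_nonneg:
  fixes S :: "real^'n^'n"
  assumes "psd_mat S" shows "S$i$i \<ge> 0"
proof -
  define x :: "real^'n" where "x = axis i 1"
  have e: "\<And>p j'. S$p$j' * (if j' = i then 1 else 0) = (if j' = i then S$p$i else 0)" by simp
  have "S *v x = (\<chi> p. S$p$i)"
    unfolding x_def by (simp add: vec_eq_iff matrix_vector_mult_def axis_def e)
  then have "x \<bullet> (S *v x) = S$i$i"
    unfolding x_def by (simp add: inner_axis')
  then show ?thesis using assms unfolding psd_mat_def by metis
qed

theorem corollary8p4:
  fixes S Khat :: "real^'n^'n"
    and L U :: "'n \<Rightarrow> 'n \<Rightarrow> ereal"
  assumes S_psd: "psd_mat S"
    and L_sym: "\<And>i j. L i j = L j i"
    and U_sym: "\<And>i j. U i j = U j i"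
    and L_nonpos: "\<And>i j. i \<noteq> j \<Longrightarrow> L i j \<le> 0"
    and U_nonneg: "\<And>i j. i \<noteq> j \<Longrightarrow> U i j \<ge> 0"
    and L_diag: "\<And>i. L i i = 0"
    and U_diag: "\<And>i. U i i = 0"
    and Khat_pd: "pd_mat Khat"
    and Khat_opt: "\<And>K. pd_mat K \<Longrightarrow> penalized_obj S L U Khat \<le> penalized_obj S L U K"
    and ij: "i \<noteq> j"
  shows "(L i j \<le> ereal (- S $ i $ j - sqrt (S $ i $ i * S $ j $ j)) \<longrightarrow> Khat $ i $ j \<ge> 0)
       \<and> (U i j \<ge> ereal (- S $ i $ j + sqrt (S $ i $ i * S $ j $ j)) \<longrightarrow> Khat $ i $ j \<le> 0)
       \<and> (L i j \<le> ereal (- S $ i $ j - sqrt (S $ i $ i * S $ j $ j)) \<and>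
          U i j \<ge> ereal (- S $ i $ j + sqrt (S $ i $ i * S $ j $ j)) \<longrightarrow> Khat $ i $ j = 0)"
proof -
  define Off where "Off = {(p::'n,q::'n). p \<noteq> q}"
  define G where "G X = (\<lambda>(p,q). max (L p q * ereal (X$p$q)) (U p q * ereal (X$p$q)))" for X :: "real^'n^'n"
  have objG: "penalized_obj S L U X = ereal (- ln (det X) + trace (S ** X)) + sum (G X) Off" for X
    unfolding penalized_obj_def G_def Off_def ..
  have Ssym: "S$j$i = S$i$j" using S_psd unfolding psd_mat_def sym_mat_iff by auto
  have Sii: "S$i$i \<ge> 0" and Sjj: "S$j$j \<ge> 0" using diag_nonneg[OF S_psd] by auto
  have pdI: "pd_mat (mat 1 :: real^'n^'n)"
    unfolding pd_mat_def
  proof safe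
    show "sym_mat (mat 1 :: real^'n^'n)" unfolding sym_mat_iff by (auto simp: mat_def)
  qed (simp add: matrix_vector_mul_lid)
  have "sum (G (mat 1)) Off = 0"
    by (rule sum.neutral) (auto simp: G_def Off_def mat_def zero_ereal_def[symmetric])
  then have "penalized_obj S L U (mat 1) \<noteq> \<infinity>" unfolding objG by simp
  then have fin: "penalized_obj S L U Khat \<noteq> \<infinity>" using Khat_opt[OF pdI] by auto
  have Gfin: "G Khat (i,j) \<noteq> \<infinity>"
  proof
    assume "G Khat (i,j) = \<infinity>"
    then have "sum (G Khat) Off = \<infinity>" using ij by (subst sum_Pinfty) (auto simp: Off_def)
    then show False using fin unfolding objG by simp
  qed
  define k where "k = Khat $ i $ j"
  define s where "s = sqrt (S $ i $ i * S $ j $ j)"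
  have s_eq: "s = sqrt (S$i$i) * sqrt (S$j$j)" unfolding s_def by (simp add: real_sqrt_mult)
  have s0: "s \<ge> 0" unfolding s_def using Sii Sjj by simp
  have sq: "s * s = S$i$i * S$j$j" unfolding s_def using Sii Sjj by simp
  have corea: "\<And>a b m. (\<And>x. x * Khat$i$j > 0 \<Longrightarrow> max (L i j * ereal x) (U i j * ereal x) = ereal (m * x))
      \<Longrightarrow> Khat$i$j \<noteq> 0 \<Longrightarrow> a \<noteq> 0 \<or> b \<noteq> 0
      \<Longrightarrow> 0 < a^2 * S$i$i + b^2 * S$j$j + a*b*(S$i$j + S$j$i) + 2*a*b*m"
    by (rule core[OF Khat_pd Khat_opt fin ij L_sym U_sym L_nonpos U_nonneg]) auto
  have P1: "Khat $ i $ j \<ge> 0" if HL: "L i j \<le> ereal (- S $ i $ j - s)"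
  proof (rule ccontr)
    assume "\<not> Khat $ i $ j \<ge> 0"
    then have kneg: "k < 0" unfolding k_def by simp
    obtain l where l: "L i j = ereal l"
    proof (cases "L i j")
      case (real r) then show ?thesis using that by blast
    next
      case PInf then show ?thesis using HL by simp
    next
      case MInf
      then have "G Khat (i,j) = \<infinity>" using kneg unfolding G_def k_def by simp
      then show ?thesis using Gfin by simp
    qed
    have lle: "l \<le> - S$i$j - s" using HL l by simp
    have l0: "l \<le> 0" using L_nonpos[OF ij] l by simp
    have hm: "max (L i j * ereal x) (U i j * ereal x) = ereal (l * x)" if "x * Khat$i$j > 0" for x
    proof -
      have "x < 0" using that kneg k_def by (simp add: zero_less_mult_iff)
      then have "U i j * ereal x \<le> 0" using U_nonneg[OF ij] by (simp add: ereal_mult_le_0_iff)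
      moreover have "l * x \<ge> 0" using l0 \<open>x < 0\<close> by (simp add: mult_nonpos_nonpos)
      moreover have "(0::ereal) \<le> ereal (l * x)" using \<open>l * x \<ge> 0\<close> by simp
      ultimately have "U i j * ereal x \<le> ereal (l * x)" using order_trans by blast
      then show ?thesis unfolding l by (simp add: max_absorb1)
    qed
    show False
    proof (cases "S$i$i = 0")
      case True
      have "0 < (1::real)^2 * S$i$i + 0^2 * S$j$j + 1*0*(S$i$j + S$j$i) + 2*1*0*l"
        using corea[of l 1 0] hm kneg k_def by auto
      then show False using True by simp
    next
      case False
      have "sqrt (S$i$i) \<noteq> 0" using False Sii by simp
      then have "0 < (sqrt (S$j$j))^2 * S$i$i + (sqrt (S$i$i))^2 * S$j$j + sqrt (S$j$j) * sqrt (S$i$i) *(S$i$j + S$j$i) + 2 * sqrt (S$j$j) * sqrt (S$i$i)*l"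
        using corea[of l "sqrt (S$j$j)" "sqrt (S$i$i)"] hm kneg k_def by auto
      also have "\<dots> = 2 * (s * (s + S$i$j + l))"
        using Sii Sjj Ssym sq s_eq by (simp add: algebra_simps)
      also have "s * (s + S$i$j + l) \<le> 0" using s0 lle by (simp add: mult_nonneg_nonpos)
      finally show False by simp
    qed
  qed
  have P2: "Khat $ i $ j \<le> 0" if HU: "U i j \<ge> ereal (- S $ i $ j + s)"
  proof (rule ccontr)
    assume "\<not> Khat $ i $ j \<le> 0"
    then have kpos: "k > 0" unfolding k_def by simp
    obtain u where u: "U i j = ereal u"
    proof (cases "U i j")
      case (real r) then show ?thesis using that by blast
    next
      case MInf then show ?thesis using HU by simp
    next
      case PInf
      then have "G Khat (i,j) = \<infinity>" using kpos unfolding G_def k_def by simp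
      then show ?thesis using Gfin by simp
    qed
    have uge: "u \<ge> - S$i$j + s" using HU u by simp
    have u0: "u \<ge> 0" using U_nonneg[OF ij] u by simp
    have hm: "max (L i j * ereal x) (U i j * ereal x) = ereal (u * x)" if "x * Khat$i$j > 0" for x
    proof -
      have "x > 0" using that kpos k_def by (simp add: zero_less_mult_iff)
      then have "L i j * ereal x \<le> 0" using L_nonpos[OF ij] by (simp add: ereal_mult_le_0_iff)
      moreover have "u * x \<ge> 0" using u0 \<open>x > 0\<close> by simp
      moreover have "(0::ereal) \<le> ereal (u * x)" using \<open>u * x \<ge> 0\<close> by simp
      ultimately have "L i j * ereal x \<le> ereal (u * x)" using order_trans by blast
      then show ?thesis unfolding u by (simp add: max_absorb2)
    qed
    show False
    proof (cases "S$i$i = 0")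
      case True
      have "0 < (1::real)^2 * S$i$i + 0^2 * S$j$j + 1*0*(S$i$j + S$j$i) + 2*1*0*u"
        using corea[of u 1 0] hm kpos k_def by auto
      then show False using True by simp
    next
      case False
      have "- sqrt (S$i$i) \<noteq> 0" using False Sii by simp
      then have "0 < (sqrt (S$j$j))^2 * S$i$i + (- sqrt (S$i$i))^2 * S$j$j + sqrt (S$j$j) * (- sqrt (S$i$i)) *(S$i$j + S$j$i) + 2 * sqrt (S$j$j) * (- sqrt (S$i$i))*u"
        using corea[of u "sqrt (S$j$j)" "- sqrt (S$i$i)"] hm kpos k_def by auto
      also have "\<dots> = 2 * (s * (s - S$i$j - u))"
        using Sii Sjj Ssym sq s_eq by (simp add: algebra_simps)
      also have "s * (s - S$i$j - u) \<le> 0" using s0 uge by (simp add: mult_nonneg_nonpos)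
      finally show False by simp
    qed
  qed
  show ?thesis using P1 P2 unfolding s_def by auto
qed

end
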